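(* Let $\Gamma$, $v$, $\Lambda$ be as in the context and suppose $v_n/|\gamma_n|^2=o(P_n)$ as $n\to\infty$. If $\Lambda$ is a $v$-perturbation of $\Gamma$ of deficiency $1$, then $\Lambda$ is not a uniqueness sequence for $H_{(\Gamma,v)}$, i.e. there is a nonzero $a\in\ell^2_v$ such that $H_{(\Gamma,v)}a$ vanishes on $\Lambda$.
   Context: $\Gamma=(\gamma_n)_{n\ge1}$ are distinct complex numbers with $\inf_n|\gamma_{n+1}|/|\gamma_n|>1$; $v=(v_n)$ positive with $\sum_nv_n/(1+|\gamma_n|^2)<\infty$. $\ell^2_v=\{(a_n):\sum|a_n|^2v_n<\infty\}$; $H_{(\Gamma,v)}a(z)=\sum_na_nv_n/(z-\gamma_n)$, $z\in\mathbb{C}\setminus\Gamma$. $V_1=1$, $V_n=\sum_{j<n}v_j$; $P_n=\sum_{j>n}v_j/|\gamma_j|^2$. $\Omega_1=\{|z|<(|\gamma_1|+|\gamma_2|)/2\}$, $\Omega_n=\{(|\gamma_{n-1}|+|\gamma_n|)/2\le|z|<(|\gamma_n|+|\gamma_{n+1}|)/2\}$ ($n\ge2$); $D_n(v;M)=\{\lambda\in\Omega_n: Mv_n/|\lambda-\gamma_n|^2\ge\max(V_n/|\lambda|^2,P_n)\}$. $\Lambda$ is a sequence of distinct nonzero complex numbers disjoint from $\Gamma$, indexed $(\lambda_n)_{n\ge n_0}$ by consecutive integers with $|\lambda_n|$ increasing. $\Lambda$ is a $v$-perturbation of $\Gamma$ if $n_0$ can be chosen so that for some sufficiently large $M$,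 $\lambda_n\in D_n(v;M)$ for all but finitely many $n$; with this $n_0$, it is exact if $n_0=1$, of deficiency $n_0-1$ if $n_0>1$, of excess $1-n_0$ if $n_0<1$. *)

theory Defs
  imports "HOL-Analysis.Analysis" "HOL-Library.Landau_Symbols"
begin

text \<open>Sequences Gamma = (gamma n), v = (v n) are indexed by n >= 1; values at index 0 are ignored.\<close>

definition sep_ratio :: "(nat \<Rightarrow> complex) \<Rightarrow> bool" where
  "sep_ratio \<gamma> \<longleftrightarrow> (\<exists>q>1. \<forall>n\<ge>1. q * cmod (\<gamma> n) \<le> cmod (\<gamma> (Suc n)))"

definition weight_ok :: "(nat \<Rightarrow> complex) \<Rightarrow> (nat \<Rightarrow> real) \<Rightarrow> bool" where
  "weight_ok \<gamma> v \<longleftrightarrow> (\<forall>n\<ge>1. v n > 0) \<and>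
     summable (\<lambda>k. v (Suc k) / (1 + (cmod (\<gamma> (Suc k)))\<^sup>2))"

definition l2v :: "(nat \<Rightarrow> real) \<Rightarrow> (nat \<Rightarrow> complex) \<Rightarrow> bool" where
  "l2v v a \<longleftrightarrow> summable (\<lambda>k. (cmod (a (Suc k)))\<^sup>2 * v (Suc k))"

definition H_term :: "(nat \<Rightarrow> complex) \<Rightarrow> (nat \<Rightarrow> real) \<Rightarrow> (nat \<Rightarrow> complex) \<Rightarrow> complex \<Rightarrow> nat \<Rightarrow> complex" where
  "H_term \<gamma> v a z k = a (Suc k) * of_real (v (Suc k)) / (z - \<gamma> (Suc k))"

definition Vsum :: "(nat \<Rightarrow> real) \<Rightarrow> nat \<Rightarrow> real" where
  "Vsum v n = (if n \<le> 1 then 1 else (\<Sum>j\<in>{1..<n}. v j))"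

definition Ptail :: "(nat \<Rightarrow> complex) \<Rightarrow> (nat \<Rightarrow> real) \<Rightarrow> nat \<Rightarrow> real" where
  "Ptail \<gamma> v n = (\<Sum>k. v (n + 1 + k) / (cmod (\<gamma> (n + 1 + k)))\<^sup>2)"

definition Omega :: "(nat \<Rightarrow> complex) \<Rightarrow> nat \<Rightarrow> complex set" where
  "Omega \<gamma> n = (if n \<le> 1 then {z. cmod z < (cmod (\<gamma> 1) + cmod (\<gamma> 2)) / 2}
     else {z. (cmod (\<gamma> (n - 1)) + cmod (\<gamma> n)) / 2 \<le> cmod z \<and>
              cmod z < (cmod (\<gamma> n) + cmod (\<gamma> (Suc n))) / 2})"

definition Dset :: "(nat \<Rightarrow> complex) \<Rightarrow> (nat \<Rightarrow> real) \<Rightarrow> real \<Rightarrow> nat \<Rightarrow> complex set" where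
  "Dset \<gamma> v M n = {w\<in>Omega \<gamma> n.
      M * v n / (cmod (w - \<gamma> n))\<^sup>2 \<ge> max (Vsum v n / (cmod w)\<^sup>2) (Ptail \<gamma> v n)}"

end

theory Submission
  imports Defs "HOL-Computational_Algebra.Polynomial"
begin

lemma lagrange_zero:
  fixes x :: "nat \<Rightarrow> complex" and p :: "complex poly"
  assumes fin: "finite S" and inj: "inj_on x S" and deg: "degree p < card S" and z: "z \<notin> x ` S"
  shows "poly p z / (\<Prod>j\<in>S. z - x j) = (\<Sum>k\<in>S. poly p (x k) / ((\<Prod>j\<in>S-{k}. x k - x j) * (z - x k)))"
proof -
  define c where "c k = poly p (x k) / (\<Prod>j\<in>S-{k}. x k - x j)" for k
  define L where "L = (\<Sum>k\<in>S. smult (c k) (\<Prod>j\<in>S-{k}. [:- x j, 1:]))"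
  have polyL: "poly L w = (\<Sum>k\<in>S. c k * (\<Prod>j\<in>S-{k}. w - x j))" for w
    unfolding L_def by (simp add: poly_sum poly_prod)
  have Sne: "S \<noteq> {}" using deg by auto
  have degL: "degree L < card S"
  proof -
    have "degree L \<le> card S - 1"
      unfolding L_def
    proof (rule degree_sum_le[OF fin])
      fix k assume k: "k \<in> S"
      have "degree (smult (c k) (\<Prod>j\<in>S-{k}. [:- x j, 1:])) \<le> degree (\<Prod>j\<in>S-{k}. [:- x j, 1:])"
        by (rule degree_smult_le)
      also have "\<dots> \<le> sum (degree \<circ> (\<lambda>j. [:- x j, 1:])) (S-{k})"
        by (rule degree_prod_sum_le) (use fin in auto)
      also have "\<dots> = card (S - {k})" by simp
      also have "\<dots> = card S - 1" using k fin by simp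
      finally show "degree (smult (c k) (\<Prod>j\<in>S-{k}. [:- x j, 1:])) \<le> card S - 1" .
    qed
    moreover have "card S > 0" using Sne fin by (simp add: card_gt_0_iff)
    ultimately show ?thesis by linarith
  qed
  have eq: "p = L"
  proof (rule poly_eqI_degree[where A = "x ` S"])
    fix w assume "w \<in> x ` S"
    then obtain i where i: "i \<in> S" "w = x i" by auto
    have "poly L (x i) = c i * (\<Prod>j\<in>S-{i}. x i - x j) + (\<Sum>k\<in>S-{i}. c k * (\<Prod>j\<in>S-{k}. x i - x j))"
      unfolding polyL using i fin by (simp add: sum.remove)
    also have "(\<Sum>k\<in>S-{i}. c k * (\<Prod>j\<in>S-{k}. x i - x j)) = 0"
    proof (rule sum.neutral, rule ballI)
      fix k assume "k \<in> S - {i}"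
      hence k: "k \<in> S" "k \<noteq> i" by auto
      have "(\<Prod>j\<in>S-{k}. x i - x j) = 0"
        using i k fin by (subst prod_zero_iff) auto
      then show "c k * (\<Prod>j\<in>S-{k}. x i - x j) = 0" by simp
    qed
    also have "(\<Prod>j\<in>S-{i}. x i - x j) \<noteq> 0"
      using i inj fin by (auto simp: inj_on_def)
    hence "c i * (\<Prod>j\<in>S-{i}. x i - x j) = poly p (x i)" by (simp add: c_def)
    finally show "poly p w = poly L w" using i by simp
  next
    show "degree p < card (x ` S)" using deg inj by (simp add: card_image)
    show "degree L < card (x ` S)" using degL inj by (simp add: card_image)
  qed
  have nz: "(\<Prod>j\<in>S. z - x j) \<noteq> 0" using z fin by auto
  have "poly p z / (\<Prod>j\<in>S. z - x j) = (\<Sum>k\<in>S. c k * (\<Prod>j\<in>S-{k}. z - x j) / (\<Prod>j\<in>S. z - x j))"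
    using eq polyL by (simp add: sum_divide_distrib)
  also have "\<dots> = (\<Sum>k\<in>S. poly p (x k) / ((\<Prod>j\<in>S-{k}. x k - x j) * (z - x k)))"
  proof (rule sum.cong[OF refl])
    fix k assume k: "k \<in> S"
    have split: "(\<Prod>j\<in>S. z - x j) = (z - x k) * (\<Prod>j\<in>S-{k}. z - x j)"
      using k fin by (simp add: prod.remove)
    have "(\<Prod>j\<in>S-{k}. z - x j) \<noteq> 0" using z fin by auto
    moreover have "z - x k \<noteq> 0" using z k by auto
    moreover have "(\<Prod>j\<in>S-{k}. x k - x j) \<noteq> 0"
      using k inj fin by (auto simp: inj_on_def)
    ultimately show "c k * (\<Prod>j\<in>S-{k}. z - x j) / (\<Prod>j\<in>S. z - x j) = poly p (x k) / ((\<Prod>j\<in>S-{k}. x k - x j) * (z - x k))"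
      unfolding split c_def by (simp add: divide_simps)
  qed
  finally show ?thesis .
qed

locale setting =
  fixes \<gamma> :: "nat \<Rightarrow> complex" and v :: "nat \<Rightarrow> real" and \<Lambda> :: "nat \<Rightarrow> complex"
    and q :: real and M :: real
  assumes q1: "q > 1"
    and sepq: "\<And>n. n \<ge> 1 \<Longrightarrow> q * cmod (\<gamma> n) \<le> cmod (\<gamma> (Suc n))"
    and inj_gamma: "inj_on \<gamma> {1..}"
    and vpos: "\<And>n. n \<ge> 1 \<Longrightarrow> v n > 0"
    and vsum: "summable (\<lambda>k. v (Suc k) / (1 + (cmod (\<gamma> (Suc k)))\<^sup>2))"
    and small_o: "(\<lambda>n. v n / (cmod (\<gamma> n))\<^sup>2) \<in> o(Ptail \<gamma> v)"
    and nonzero: "\<And>n. n \<ge> 2 \<Longrightarrow> \<Lambda> n \<noteq> 0"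
    and disjoint: "\<And>n m. n \<ge> 2 \<Longrightarrow> m \<ge> 1 \<Longrightarrow> \<Lambda> n \<noteq> \<gamma> m"
    and Dev: "\<forall>\<^sub>F n in sequentially. \<Lambda> n \<in> Dset \<gamma> v M n"
begin

lemma gpow: assumes "1 \<le> n" "n \<le> k" shows "q ^ (k - n) * cmod (\<gamma> n) \<le> cmod (\<gamma> k)"
  using assms(2)
proof (induction k rule: dec_induct)
  case base then show ?case by simp
next
  case (step k)
  have "q ^ (Suc k - n) * cmod (\<gamma> n) = q * (q ^ (k - n) * cmod (\<gamma> n))"
    using step.hyps by (simp add: Suc_diff_le)
  also have "\<dots> \<le> q * cmod (\<gamma> k)" using step.IH q1 by simp
  also have "\<dots> \<le> cmod (\<gamma> (Suc k))" using sepq step.hyps assms(1) by simp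
  finally show ?case .
qed

lemma g2nz: "\<gamma> 2 \<noteq> 0"
proof
  assume h: "\<gamma> 2 = 0"
  have "q * cmod (\<gamma> 1) \<le> cmod (\<gamma> 2)" using sepq[of 1] by (simp add: numeral_2_eq_2)
  hence "\<gamma> 1 = 0" using h q1 by (simp add: mult_le_0_iff)
  hence "\<gamma> 1 = \<gamma> 2" using h by simp
  from inj_onD[OF inj_gamma this] show False by simp
qed

lemma ggrow: "n \<ge> 2 \<Longrightarrow> q ^ (n - 2) * cmod (\<gamma> 2) \<le> cmod (\<gamma> n)"
  using gpow[of 2 n] by simp

lemma gnz: "n \<ge> 2 \<Longrightarrow> \<gamma> n \<noteq> 0"
proof
  assume n: "n \<ge> 2" and h: "\<gamma> n = 0"
  have "q ^ (n - 2) * cmod (\<gamma> 2) > 0" using q1 g2nz by simp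
  thus False using ggrow[OF n] h by simp
qed

lemma gne: "n \<ge> 1 \<Longrightarrow> k \<ge> 1 \<Longrightarrow> n \<noteq> k \<Longrightarrow> \<gamma> n \<noteq> \<gamma> k"
  using inj_gamma by (auto simp: inj_on_def)

definition Q :: real where "Q = q / (q - 1)"

lemma Qpos: "Q > 1" using q1 by (simp add: Q_def)

lemma W_lt:
  assumes "1 \<le> n" "n < k"
  shows "cmod (\<gamma> k) / cmod (\<gamma> n - \<gamma> k) \<le> Q"
proof -
  have k2: "k \<ge> 2" using assms by simp
  have "q ^ (k - n) * cmod (\<gamma> n) \<le> cmod (\<gamma> k)" using gpow assms by simp
  moreover have "q \<le> q ^ (k - n)" using q1 assms by (simp add: power_increasing[of 1 "k-n" q, simplified])
  ultimately have "q * cmod (\<gamma> n) \<le> cmod (\<gamma> k)"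
    by (meson mult_right_mono norm_ge_zero order_trans)
  have gk: "cmod (\<gamma> k) > 0" using gnz[OF k2] by simp
  have "cmod (\<gamma> n - \<gamma> k) \<ge> cmod (\<gamma> k) - cmod (\<gamma> n)"
    by (metis norm_minus_commute norm_triangle_ineq2)
  moreover have "cmod (\<gamma> k) - cmod (\<gamma> n) \<ge> cmod (\<gamma> k) * (1 - 1/q)"
    using \<open>q * cmod (\<gamma> n) \<le> cmod (\<gamma> k)\<close> q1 by (simp add: field_simps)
  moreover have "cmod (\<gamma> k) * (1 - 1/q) > 0" using gk q1 by simp
  ultimately have "cmod (\<gamma> k) / cmod (\<gamma> n - \<gamma> k) \<le> cmod (\<gamma> k) / (cmod (\<gamma> k) * (1 - 1/q))"
    by (intro frac_le) auto
  also have "\<dots> = Q" using gk q1 by (simp add: Q_def field_simps)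
  finally show ?thesis .
qed

lemma W_gt:
  assumes "1 \<le> k" "k < n"
  shows "cmod (\<gamma> k) / cmod (\<gamma> n - \<gamma> k) \<le> Q * (1/q) ^ (n - k)"
proof -
  have n2: "n \<ge> 2" using assms by simp
  have h: "q ^ (n - k) * cmod (\<gamma> k) \<le> cmod (\<gamma> n)" using gpow assms by simp
  have qq: "q \<le> q ^ (n - k)" using q1 assms by (simp add: power_increasing[of 1 "n-k" q, simplified])
  have gn: "cmod (\<gamma> n) > 0" using gnz[OF n2] by simp
  have qp: "q ^ (n - k) > 0" using q1 by simp
  have gk: "cmod (\<gamma> k) \<le> cmod (\<gamma> n) / q ^ (n - k)" using h qp by (simp add: field_simps)
  have "cmod (\<gamma> n) / q ^ (n - k) \<le> cmod (\<gamma> n) / q" using qq q1 gn by (intro divide_left_mono) auto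
  have "cmod (\<gamma> n - \<gamma> k) \<ge> cmod (\<gamma> n) - cmod (\<gamma> k)"
    by (metis norm_triangle_ineq2)
  moreover have "cmod (\<gamma> n) - cmod (\<gamma> k) \<ge> cmod (\<gamma> n) * (1 - 1/q)"
    using gk \<open>cmod (\<gamma> n) / q ^ (n - k) \<le> cmod (\<gamma> n) / q\<close> by (simp add: field_simps)
  moreover have "cmod (\<gamma> n) * (1 - 1/q) > 0" using gn q1 by simp
  ultimately have "cmod (\<gamma> k) / cmod (\<gamma> n - \<gamma> k) \<le> (cmod (\<gamma> n) / q ^ (n - k)) / (cmod (\<gamma> n) * (1 - 1/q))"
    using gk qp by (intro frac_le) auto
  also have "\<dots> = Q * (1/q) ^ (n - k)" using gn q1 by (simp add: Q_def field_simps power_divide)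
  finally show ?thesis .
qed

end

context setting begin

lemma g_large: "\<forall>\<^sub>F n in sequentially. c \<le> cmod (\<gamma> n)"
proof -
  obtain N where N: "c / cmod (\<gamma> 2) < q ^ N" using real_arch_pow[OF q1] by blast
  have g2: "cmod (\<gamma> 2) > 0" using g2nz by simp
  show ?thesis unfolding eventually_sequentially
  proof (intro exI allI impI)
    fix n assume n: "n \<ge> N + 2"
    have "c < q ^ N * cmod (\<gamma> 2)" using N g2 by (simp add: field_simps)
    also have "\<dots> \<le> q ^ (n - 2) * cmod (\<gamma> 2)"
      using n q1 g2 by (intro mult_right_mono power_increasing) auto
    also have "\<dots> \<le> cmod (\<gamma> n)" using ggrow n by simp
    finally show "c \<le> cmod (\<gamma> n)" by simp
  qed
qed

definition u :: "nat \<Rightarrow> real" where "u n = v n / (cmod (\<gamma> n))\<^sup>2"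

lemma u_nonneg: "n \<ge> 1 \<Longrightarrow> u n \<ge> 0" using vpos[of n] by (simp add: u_def)
lemma u_pos: "n \<ge> 2 \<Longrightarrow> u n > 0" using vpos[of n] gnz[of n] by (simp add: u_def)

lemma u_summ1: "summable (\<lambda>k. u (Suc k))"
proof (rule summable_comparison_test_ev)
  show "summable (\<lambda>k. 2 * (v (Suc k) / (1 + (cmod (\<gamma> (Suc k)))\<^sup>2)))"
    using vsum by (rule summable_mult)
  have "\<forall>\<^sub>F k in sequentially. 1 \<le> cmod (\<gamma> (Suc k))"
    using g_large[of 1] by (rule eventually_sequentially_Suc[THEN iffD2])
  then show "\<forall>\<^sub>F k in sequentially. norm (u (Suc k)) \<le> 2 * (v (Suc k) / (1 + (cmod (\<gamma> (Suc k)))\<^sup>2))"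
  proof eventually_elim
    case (elim k)
    have v: "v (Suc k) > 0" using vpos by simp
    have g: "(cmod (\<gamma> (Suc k)))\<^sup>2 \<ge> 1" using elim by (simp add: one_le_power)
    have "norm (u (Suc k)) = v (Suc k) / (cmod (\<gamma> (Suc k)))\<^sup>2" using v by (simp add: u_def)
    also have "\<dots> \<le> v (Suc k) / ((1 + (cmod (\<gamma> (Suc k)))\<^sup>2) / 2)"
      using v g by (intro divide_left_mono mult_pos_pos) auto
    also have "\<dots> = 2 * (v (Suc k) / (1 + (cmod (\<gamma> (Suc k)))\<^sup>2))" by simp
    finally show ?case .
  qed
qed

lemma u_summ: "summable (\<lambda>k. u (n + 1 + k))"
proof -
  have "summable (\<lambda>k. u (Suc (k + n)))"
    using summable_ignore_initial_segment[OF u_summ1, of n] by simp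
  thus ?thesis by (simp add: add.commute)
qed

lemma Ptail_u: "Ptail \<gamma> v n = (\<Sum>k. u (n + 1 + k))"
  unfolding Ptail_def u_def ..

lemma Ptail_rec: "Ptail \<gamma> v n = u (Suc n) + Ptail \<gamma> v (Suc n)"
proof -
  have "(\<Sum>k. u (n + 1 + Suc k)) = (\<Sum>k. u (n + 1 + k)) - u (n + 1 + 0)"
    by (rule suminf_split_head[OF u_summ])
  moreover have "(\<lambda>k. u (n + 1 + Suc k)) = (\<lambda>k. u (Suc n + 1 + k))" by simp
  ultimately show ?thesis unfolding Ptail_u by simp
qed

lemma Ptail_nonneg: "Ptail \<gamma> v n \<ge> 0"
  unfolding Ptail_u by (rule suminf_nonneg[OF u_summ]) (simp add: u_nonneg)

lemma Ptail_pos: "n \<ge> 1 \<Longrightarrow> Ptail \<gamma> v n > 0"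
  using Ptail_rec[of n] Ptail_nonneg[of "Suc n"] u_pos[of "Suc n"] by simp

lemma uP_ev: "\<delta> > 0 \<Longrightarrow> \<forall>\<^sub>F n in sequentially. u n \<le> \<delta> * Ptail \<gamma> v n"
proof -
  assume d: "\<delta> > 0"
  have "\<forall>\<^sub>F n in sequentially. norm (v n / (cmod (\<gamma> n))\<^sup>2) \<le> \<delta> * norm (Ptail \<gamma> v n)"
    using landau_o.smallD[OF small_o d] .
  moreover have "\<forall>\<^sub>F n in sequentially. n \<ge> 1" by (simp add: eventually_ge_at_top)
  ultimately show ?thesis
  proof eventually_elim
    case (elim n)
    have "v n > 0" using vpos elim by simp
    thus ?case using elim Ptail_nonneg[of n] by (simp add: u_def)
  qed
qed

lemma uP_tends: "(\<lambda>n. u n / Ptail \<gamma> v n) \<longlonglongrightarrow> 0"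
  using smalloD_tendsto[OF small_o] by (simp add: u_def)

definition e :: "nat \<Rightarrow> real" where
  "e n = (if n \<ge> 2 then cmod (\<Lambda> n - \<gamma> n) / cmod (\<Lambda> n) else 0)"

lemma e_nonneg: "e n \<ge> 0" by (simp add: e_def)

lemma e_sq_bound: "\<forall>\<^sub>F n in sequentially. (e n)\<^sup>2 \<le> 4 * M * (u n / Ptail \<gamma> v n)"
  using Dev eventually_ge_at_top[of 2]
proof eventually_elim
  case (elim n)
  have n2: "n \<ge> 2" using elim by simp
  from elim(1) have Om: "(cmod (\<gamma> (n - 1)) + cmod (\<gamma> n)) / 2 \<le> cmod (\<Lambda> n)"
    and D: "M * v n / (cmod (\<Lambda> n - \<gamma> n))\<^sup>2 \<ge> Ptail \<gamma> v n"
    using n2 by (auto simp: Dset_def Omega_def)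
  have G: "cmod (\<gamma> n) > 0" using gnz[OF n2] by simp
  have L: "cmod (\<Lambda> n) \<ge> cmod (\<gamma> n) / 2" 
    by (rule order_trans[OF _ Om]) simp
  have d: "cmod (\<Lambda> n - \<gamma> n) > 0" using disjoint[OF n2, of n] n2 by simp
  have P: "Ptail \<gamma> v n > 0" using Ptail_pos n2 by simp
  have d2: "(cmod (\<Lambda> n - \<gamma> n))\<^sup>2 \<le> M * v n / Ptail \<gamma> v n"
    using D d P by (simp add: field_simps)
  have L2: "(cmod (\<Lambda> n))\<^sup>2 \<ge> (cmod (\<gamma> n))\<^sup>2 / 4"
  proof -
    have "(cmod (\<gamma> n) / 2)\<^sup>2 \<le> (cmod (\<Lambda> n))\<^sup>2" using L G by (intro power_mono) auto
    thus ?thesis by (simp add: power_divide)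
  qed
  have "(e n)\<^sup>2 = (cmod (\<Lambda> n - \<gamma> n))\<^sup>2 / (cmod (\<Lambda> n))\<^sup>2" using n2 by (simp add: e_def power_divide)
  also have "\<dots> \<le> (M * v n / Ptail \<gamma> v n) / ((cmod (\<gamma> n))\<^sup>2 / 4)"
    using d2 L2 G order_trans[OF zero_le_power2 d2] by (intro frac_le) auto
  also have "\<dots> = 4 * M * (u n / Ptail \<gamma> v n)" by (simp add: u_def field_simps)
  finally show ?case .
qed

lemma e_tends: "e \<longlonglongrightarrow> 0"
proof (rule tendsto_sandwich[where f = "\<lambda>_. 0" and h = "\<lambda>n. sqrt (4 * M * (u n / Ptail \<gamma> v n))"])
  show "\<forall>\<^sub>F n in sequentially. 0 \<le> e n" by (simp add: e_nonneg)
  show "\<forall>\<^sub>F n in sequentially. e n \<le> sqrt (4 * M * (u n / Ptail \<gamma> v n))"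
    using e_sq_bound by eventually_elim (metis e_nonneg real_le_rsqrt)
  show "(\<lambda>n. sqrt (4 * M * (u n / Ptail \<gamma> v n))) \<longlonglongrightarrow> 0"
    using tendsto_real_sqrt[OF tendsto_mult_right_zero[OF uP_tends, of "4*M"]] by simp
qed simp

lemma e_bounded: "\<exists>E>0. \<forall>n. e n \<le> E"
proof -
  have "Bseq e" using e_tends by (rule convergent_imp_Bseq[OF convergentI])
  then obtain E where "E > 0" "\<And>n. norm (e n) \<le> E" by (auto simp: Bseq_def)
  thus ?thesis using e_nonneg by (metis real_norm_def abs_of_nonneg)
qed

end

context setting begin

definition E :: real where "E = (SOME E. E > 0 \<and> (\<forall>n. e n \<le> E))"
lemma E_prop: "E > 0 \<and> (\<forall>n. e n \<le> E)"
  unfolding E_def using e_bounded by (rule someI_ex)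
lemma E_pos: "E > 0" using E_prop by simp
lemma e_le_E: "e n \<le> E" using E_prop by simp

definition \<rho> :: "nat \<Rightarrow> nat \<Rightarrow> complex" where
  "\<rho> k n = (\<gamma> k - \<Lambda> n) * \<gamma> n / (\<Lambda> n * (\<gamma> k - \<gamma> n))"
definition fct :: "nat \<Rightarrow> nat \<Rightarrow> complex" where
  "fct k n = (if 2 \<le> n \<and> n \<noteq> k then \<rho> k n else 1)"
definition \<alpha> :: "nat \<Rightarrow> complex" where
  "\<alpha> k = (if k = 1 then 1 else (\<gamma> k - \<Lambda> k) * \<gamma> k / (\<Lambda> k * (\<gamma> k - \<gamma> 1)))"
definition pp :: "nat \<Rightarrow> nat \<Rightarrow> complex" where "pp k N = (\<Prod>n\<le>N. fct k n)"
definition dN :: "nat \<Rightarrow> nat \<Rightarrow> complex" where "dN k N = \<alpha> k * pp k N"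
definition d :: "nat \<Rightarrow> complex" where "d k = \<alpha> k * prodinf (fct k)"

lemma fct_dev:
  assumes k: "k \<ge> 1"
  shows "norm (fct k n - 1) = (if 2 \<le> n \<and> n \<noteq> k then e n * (cmod (\<gamma> k) / cmod (\<gamma> n - \<gamma> k)) else 0)"
proof (cases "2 \<le> n \<and> n \<noteq> k")
  case True
  have L: "\<Lambda> n \<noteq> 0" using nonzero True by simp
  have G: "\<gamma> k - \<gamma> n \<noteq> 0" using gne[of k n] True k by simp
  have "fct k n - 1 = \<gamma> k * (\<gamma> n - \<Lambda> n) / (\<Lambda> n * (\<gamma> k - \<gamma> n))"
    using True L G by (simp add: fct_def \<rho>_def field_simps)
  hence "norm (fct k n - 1) = cmod (\<gamma> k) * cmod (\<gamma> n - \<Lambda> n) / (cmod (\<Lambda> n) * cmod (\<gamma> k - \<gamma> n))"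
    by (simp add: norm_mult norm_divide)
  also have "\<dots> = e n * (cmod (\<gamma> k) / cmod (\<gamma> n - \<gamma> k))"
    using True by (simp add: e_def norm_minus_commute)
  finally show ?thesis using True by simp
next
  case False
  have "fct k n = 1" unfolding fct_def by (rule if_not_P[OF False])
  thus ?thesis by (simp only: if_not_P[OF False]) simp
qed

lemma fct_le1: "k \<ge> 1 \<Longrightarrow> norm (fct k n - 1) \<le> Q * e n"
proof -
  assume k: "k \<ge> 1"
  show ?thesis
  proof (cases "2 \<le> n \<and> n \<noteq> k")
    case True
    have "cmod (\<gamma> k) / cmod (\<gamma> n - \<gamma> k) \<le> Q"
    proof (cases "n < k")
      case True then show ?thesis using W_lt[of n k] \<open>2 \<le> n \<and> n \<noteq> k\<close> by simp
    next
      case False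
      hence "k < n" using True by simp
      hence "cmod (\<gamma> k) / cmod (\<gamma> n - \<gamma> k) \<le> Q * (1/q) ^ (n - k)" using W_gt k by simp
      also have "\<dots> \<le> Q * 1" using q1 Qpos by (intro mult_left_mono power_le_one) auto
      finally show ?thesis by simp
    qed
    hence "e n * (cmod (\<gamma> k) / cmod (\<gamma> n - \<gamma> k)) \<le> e n * Q"
      using e_nonneg[of n] by (rule mult_left_mono)
    then show ?thesis using fct_dev[OF k, of n] True by (simp add: mult.commute)
  next
    case False then show ?thesis using fct_dev[OF k, of n] e_nonneg[of n] Qpos by simp
  qed
qed

lemma fct_le2: "k \<ge> 1 \<Longrightarrow> k < n \<Longrightarrow> norm (fct k n - 1) \<le> Q * E * (1/q) ^ (n - k)"
proof -
  assume k: "k \<ge> 1" and kn: "k < n"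
  show ?thesis
  proof (cases "2 \<le> n")
    case True
    have W: "cmod (\<gamma> k) / cmod (\<gamma> n - \<gamma> k) \<le> Q * (1/q) ^ (n - k)" using W_gt k kn by simp
    have "norm (fct k n - 1) = e n * (cmod (\<gamma> k) / cmod (\<gamma> n - \<gamma> k))"
      using fct_dev[OF k, of n] True kn by simp
    also have "\<dots> \<le> E * (Q * (1/q) ^ (n - k))"
      using W e_le_E[of n] e_nonneg[of n] by (intro mult_mono) auto
    finally show ?thesis by (simp add: mult_ac)
  next
    case False then show ?thesis using fct_dev[OF k, of n] Qpos E_pos q1 by simp
  qed
qed

definition h :: "nat \<Rightarrow> nat \<Rightarrow> real" where
  "h k n = (if n < k then Q * e n else Q * E * (1/q) ^ (n - k))"

lemma fct_le_h: "k \<ge> 1 \<Longrightarrow> norm (fct k n - 1) \<le> h k n"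
proof -
  assume k: "k \<ge> 1"
  consider "n < k" | "n = k" | "k < n" by linarith
  then show ?thesis
  proof cases
    case 1 then show ?thesis using fct_le1[OF k] by (simp add: h_def)
  next
    case 2 then show ?thesis using Qpos E_pos q1 by (simp add: h_def fct_def)
  next
    case 3 then show ?thesis using fct_le2[OF k] by (simp add: h_def)
  qed
qed

lemma h_shift: "(\<lambda>n. h k (n + k)) = (\<lambda>n. Q * E * (1/q) ^ n)"
  by (simp add: h_def)

lemma geo_q: "summable (\<lambda>n. (1/q :: real) ^ n)" "(\<Sum>n. (1/q :: real) ^ n) = Q"
proof -
  show "summable (\<lambda>n. (1/q :: real) ^ n)" using q1 by (intro summable_geometric) simp
  have "(\<Sum>n. (1/q :: real) ^ n) = 1 / (1 - 1/q)" using q1 by (intro suminf_geometric) simp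
  also have "\<dots> = Q" using q1 by (simp add: Q_def field_simps)
  finally show "(\<Sum>n. (1/q :: real) ^ n) = Q" .
qed

lemma h_summable: "summable (h k)"
proof -
  have "summable (\<lambda>n. h k (n + k))" unfolding h_shift using geo_q(1) by (rule summable_mult)
  thus ?thesis by simp
qed

definition S :: "nat \<Rightarrow> real" where "S k = Q * (\<Sum>i<k. e i) + Q * E * Q"

lemma h_suminf: "suminf (h k) = S k"
proof -
  have "suminf (h k) = (\<Sum>n. h k (n + k)) + (\<Sum>i<k. h k i)"
    by (rule suminf_split_initial_segment[OF h_summable])
  also have "(\<Sum>n. h k (n + k)) = Q * E * Q"
    unfolding h_shift using suminf_mult[OF geo_q(1), of "Q*E"] geo_q(2) by simp
  also have "(\<Sum>i<k. h k i) = Q * (\<Sum>i<k. e i)"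
    by (simp add: h_def sum_distrib_left)
  finally show ?thesis by (simp add: S_def)
qed

lemma h_nonneg: "h k n \<ge> 0"
  using Qpos E_pos q1 e_nonneg[of n] by (simp add: h_def)

lemma fct_summable: "k \<ge> 1 \<Longrightarrow> summable (\<lambda>n. norm (fct k n - 1))"
  by (rule summable_comparison_test[OF _ h_summable[of k]]) (simp add: fct_le_h)

lemma fct_conv: "k \<ge> 1 \<Longrightarrow> convergent_prod (fct k)"
  by (intro abs_convergent_prod_imp_convergent_prod summable_imp_abs_convergent_prod fct_summable)

lemma pp_tends: "k \<ge> 1 \<Longrightarrow> pp k \<longlonglongrightarrow> prodinf (fct k)"
  unfolding pp_def[abs_def] by (rule convergent_prod_LIMSEQ[OF fct_conv])

lemma pp_bound: "k \<ge> 1 \<Longrightarrow> norm (pp k N) \<le> exp (S k)"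
proof -
  assume k: "k \<ge> 1"
  have "norm (pp k N) \<le> (\<Prod>n\<le>N. norm (fct k n))" unfolding pp_def by (rule norm_prod_le)
  also have "\<dots> \<le> (\<Prod>n\<le>N. exp (h k n))"
  proof (rule prod_mono, rule conjI)
    fix n
    show "0 \<le> norm (fct k n)" by simp
    have "norm (fct k n) \<le> 1 + norm (fct k n - 1)"
      using norm_triangle_ineq[of 1 "fct k n - 1"] by simp
    also have "\<dots> \<le> 1 + h k n" using fct_le_h[OF k] by simp
    also have "\<dots> \<le> exp (h k n)" by (rule exp_ge_add_one_self)
    finally show "norm (fct k n) \<le> exp (h k n)" .
  qed
  also have "\<dots> = exp (\<Sum>n\<le>N. h k n)" by (simp add: exp_sum)
  also have "\<dots> \<le> exp (S k)"
  proof -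
    have "(\<Sum>n\<le>N. h k n) = (\<Sum>n<Suc N. h k n)" by (simp add: lessThan_Suc_atMost)
    also have "\<dots> \<le> suminf (h k)" by (rule sum_le_suminf[OF h_summable]) (auto simp: h_nonneg)
    finally show ?thesis by (simp add: h_suminf)
  qed
  finally show ?thesis .
qed

lemma prodinf_bound: "k \<ge> 1 \<Longrightarrow> norm (prodinf (fct k)) \<le> exp (S k)"
  by (rule LIMSEQ_le_const2[OF tendsto_norm[OF pp_tends]]) (use pp_bound in auto)

definition B :: "nat \<Rightarrow> real" where "B k = norm (\<alpha> k) * exp (S k)"

lemma dN_bound: "k \<ge> 1 \<Longrightarrow> norm (dN k N) \<le> B k"
  unfolding dN_def B_def norm_mult by (intro mult_left_mono pp_bound) auto

lemma d_bound: "k \<ge> 1 \<Longrightarrow> norm (d k) \<le> B k"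
  unfolding d_def B_def norm_mult by (intro mult_left_mono prodinf_bound) auto

lemma dN_tends: "k \<ge> 1 \<Longrightarrow> (\<lambda>N. dN k N) \<longlonglongrightarrow> d k"
  unfolding dN_def d_def by (intro tendsto_mult_left pp_tends)

lemma d1_nz: "d 1 \<noteq> 0"
proof -
  have "prodinf (fct 1) \<noteq> 0"
  proof (rule prodinf_nonzero[OF fct_conv])
    fix n
    show "fct 1 n \<noteq> 0"
    proof (cases "2 \<le> n")
      case True
      have "\<gamma> 1 - \<Lambda> n \<noteq> 0" using disjoint[of n 1] True by auto
      moreover have "\<gamma> n \<noteq> 0" using gnz True by simp
      moreover have "\<Lambda> n \<noteq> 0" using nonzero True by simp
      moreover have "\<gamma> 1 - \<gamma> n \<noteq> 0" using gne[of 1 n] True by simp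
      ultimately show ?thesis using True by (simp add: fct_def \<rho>_def)
    qed (simp add: fct_def)
  qed simp
  thus ?thesis by (simp add: d_def \<alpha>_def)
qed

lemma alpha_bound: "k \<ge> 2 \<Longrightarrow> norm (\<alpha> k) \<le> Q * e k"
proof -
  assume k: "k \<ge> 2"
  have "norm (\<alpha> k) = e k * (cmod (\<gamma> k) / cmod (\<gamma> 1 - \<gamma> k))"
    using k by (simp add: \<alpha>_def e_def norm_mult norm_divide norm_minus_commute)
  also have "\<dots> \<le> e k * Q" using W_lt[of 1 k] k e_nonneg[of k] by (intro mult_left_mono) auto
  finally show ?thesis by (simp add: mult.commute)
qed

end

context setting begin

lemma pp_alt: "pp k N = (\<Prod>n\<in>{2..N}-{k}. \<rho> k n)"
proof -
  have "(\<Prod>n\<in>{..N} \<inter> {n. 2 \<le> n \<and> n \<noteq> k}. \<rho> k n) = (\<Prod>n\<le>N. fct k n)"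
    by (subst prod.inter_restrict) (auto simp: fct_def)
  moreover have "{..N} \<inter> {n. 2 \<le> n \<and> n \<noteq> k} = {2..N}-{k}" by auto
  ultimately show ?thesis by (simp add: pp_def)
qed

lemma dN_formula:
  assumes k: "k \<in> {1..N}"
  shows "(\<Prod>n\<in>{2..N}. \<gamma> n / \<Lambda> n) * (\<Prod>n\<in>{2..N}. \<gamma> k - \<Lambda> n) / (\<Prod>j\<in>{1..N}-{k}. \<gamma> k - \<gamma> j) = dN k N"
proof -
  define g where "g n = (\<gamma> k - \<Lambda> n) * (\<gamma> n / \<Lambda> n)" for n
  have num: "(\<Prod>n\<in>{2..N}. \<gamma> n / \<Lambda> n) * (\<Prod>n\<in>{2..N}. \<gamma> k - \<Lambda> n) = (\<Prod>n\<in>{2..N}. g n)"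
    unfolding g_def prod.distrib by (simp add: mult.commute)
  have rho: "\<rho> k n = g n / (\<gamma> k - \<gamma> n)" for n
    by (simp add: \<rho>_def g_def)
  show ?thesis
  proof (cases "k = 1")
    case True
    have "{1..N} - {k} = {2..N}" using True by auto
    moreover have "{2..N} - {k} = {2..N}" using True by auto
    moreover have "(\<Prod>n\<in>{2..N}. \<rho> k n) = (\<Prod>n\<in>{2..N}. g n) / (\<Prod>n\<in>{2..N}. \<gamma> k - \<gamma> n)"
      unfolding rho by (rule prod_dividef)
    moreover have "\<alpha> k = 1" using True by (simp add: \<alpha>_def)
    ultimately show ?thesis
      unfolding num dN_def pp_alt by simp
  next
    case False
    hence k2: "k \<ge> 2" "k \<le> N" using k by auto
    have "(\<Prod>n\<in>{2..N}. g n) = g k * (\<Prod>n\<in>{2..N}-{k}. g n)"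
      using k2 by (intro prod.remove) auto
    moreover have "(\<Prod>j\<in>{1..N}-{k}. \<gamma> k - \<gamma> j) = (\<gamma> k - \<gamma> 1) * (\<Prod>j\<in>({1..N}-{k})-{1}. \<gamma> k - \<gamma> j)"
      using k2 by (intro prod.remove) auto
    moreover have "({1..N}-{k})-{1} = {2..N}-{k}" by auto
    ultimately have "(\<Prod>n\<in>{2..N}. g n) / (\<Prod>j\<in>{1..N}-{k}. \<gamma> k - \<gamma> j)
        = (g k / (\<gamma> k - \<gamma> 1)) * (\<Prod>n\<in>{2..N}-{k}. g n / (\<gamma> k - \<gamma> n))"
      by (simp add: prod_dividef)
    moreover have "g k / (\<gamma> k - \<gamma> 1) = \<alpha> k" using False by (simp add: \<alpha>_def g_def)
    ultimately show ?thesis unfolding num dN_def pp_alt rho by (metis times_divide_eq_left mult.commute)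
  qed
qed

lemma lagrange_dN:
  assumes m: "2 \<le> m" "m \<le> N"
  shows "(\<Sum>k\<in>{1..N}. dN k N / (\<Lambda> m - \<gamma> k)) = 0"
proof -
  define p where "p = (\<Prod>n\<in>{2..N}. [:- \<Lambda> n, 1:])"
  define K where "K = (\<Prod>n\<in>{2..N}. \<gamma> n / \<Lambda> n)"
  have degp: "degree p < card {1..N}"
  proof -
    have "degree p \<le> sum (degree \<circ> (\<lambda>n. [:- \<Lambda> n, 1:])) {2..N}"
      unfolding p_def by (rule degree_prod_sum_le) simp
    also have "\<dots> = N - 1" by simp
    finally show ?thesis using m by simp
  qed
  have inj: "inj_on \<gamma> {1..N}" using inj_gamma by (rule inj_on_subset) auto
  have z: "\<Lambda> m \<notin> \<gamma> ` {1..N}" using disjoint m by auto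
  have polyp: "poly p w = (\<Prod>n\<in>{2..N}. w - \<Lambda> n)" for w
    unfolding p_def poly_prod by simp
  have "poly p (\<Lambda> m) = 0" unfolding polyp using m by (intro prod_zero) auto
  hence "0 = (\<Sum>k\<in>{1..N}. poly p (\<gamma> k) / ((\<Prod>j\<in>{1..N}-{k}. \<gamma> k - \<gamma> j) * (\<Lambda> m - \<gamma> k)))"
    using lagrange_zero[OF _ inj degp z] by simp
  hence "0 = K * (\<Sum>k\<in>{1..N}. poly p (\<gamma> k) / ((\<Prod>j\<in>{1..N}-{k}. \<gamma> k - \<gamma> j) * (\<Lambda> m - \<gamma> k)))"
    by simp
  also have "\<dots> = (\<Sum>k\<in>{1..N}. dN k N / (\<Lambda> m - \<gamma> k))"
    unfolding sum_distrib_left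
  proof (rule sum.cong[OF refl])
    fix k assume k: "k \<in> {1..N}"
    have "K * (poly p (\<gamma> k) / ((\<Prod>j\<in>{1..N}-{k}. \<gamma> k - \<gamma> j) * (\<Lambda> m - \<gamma> k)))
        = (K * poly p (\<gamma> k) / (\<Prod>j\<in>{1..N}-{k}. \<gamma> k - \<gamma> j)) / (\<Lambda> m - \<gamma> k)"
      by simp
    also have "K * poly p (\<gamma> k) / (\<Prod>j\<in>{1..N}-{k}. \<gamma> k - \<gamma> j) = dN k N"
      using dN_formula[OF k] unfolding K_def polyp .
    finally show "K * (poly p (\<gamma> k) / ((\<Prod>j\<in>{1..N}-{k}. \<gamma> k - \<gamma> j) * (\<Lambda> m - \<gamma> k))) = dN k N / (\<Lambda> m - \<gamma> k)" .
  qed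
  finally show ?thesis by simp
qed

end

context setting begin

lemma T_bound: "\<delta> > 0 \<Longrightarrow> \<exists>C. \<forall>k. (\<Sum>i<k. e i) \<le> C + \<delta> * real k"
proof -
  assume d: "\<delta> > 0"
  have "\<forall>\<^sub>F n in sequentially. e n < \<delta>" using e_tends d by (rule order_tendstoD)
  then obtain N where N: "\<And>n. n \<ge> N \<Longrightarrow> e n < \<delta>" by (auto simp: eventually_sequentially)
  have "(\<Sum>i<k. e i) \<le> (\<Sum>i<N. e i) + \<delta> * real k" for k
  proof (induction k)
    case 0 then show ?case by (simp add: sum_nonneg e_nonneg)
  next
    case (Suc k)
    show ?case
    proof (cases "k < N")
      case True
      have "(\<Sum>i<Suc k. e i) \<le> (\<Sum>i<N. e i)"
        using True by (intro sum_mono2) (auto simp: e_nonneg)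
      moreover have "0 \<le> \<delta> * real (Suc k)" using d by simp
      ultimately show ?thesis by linarith
    next
      case False
      then have "e k \<le> \<delta>" using N[of k] by simp
      then show ?thesis using Suc.IH by (simp add: algebra_simps)
    qed
  qed
  thus ?thesis by blast
qed

lemma P_lower: "\<delta> > 0 \<Longrightarrow> \<exists>C N2. \<forall>k\<ge>N2. 1 / Ptail \<gamma> v k \<le> C * (1 + \<delta>) ^ k"
proof -
  assume d: "\<delta> > 0"
  obtain N where N: "\<And>n. n \<ge> N \<Longrightarrow> u n \<le> \<delta> * Ptail \<gamma> v n"
    using uP_ev[OF d] by (auto simp: eventually_sequentially)
  define N2 where "N2 = N + 1"
  have P: "k \<ge> N2 \<Longrightarrow> Ptail \<gamma> v N2 \<le> (1 + \<delta>) ^ (k - N2) * Ptail \<gamma> v k" for k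
  proof (induction k rule: dec_induct)
    case base then show ?case by simp
  next
    case (step k)
    have "Ptail \<gamma> v k = u (Suc k) + Ptail \<gamma> v (Suc k)" by (rule Ptail_rec)
    also have "\<dots> \<le> (1 + \<delta>) * Ptail \<gamma> v (Suc k)"
      using N[of "Suc k"] step.hyps by (simp add: N2_def algebra_simps)
    finally have "Ptail \<gamma> v k \<le> (1 + \<delta>) * Ptail \<gamma> v (Suc k)" .
    hence "(1 + \<delta>) ^ (k - N2) * Ptail \<gamma> v k \<le> (1 + \<delta>) ^ (k - N2) * ((1 + \<delta>) * Ptail \<gamma> v (Suc k))"
      using d by (intro mult_left_mono) auto
    also have "\<dots> = (1 + \<delta>) ^ (Suc k - N2) * Ptail \<gamma> v (Suc k)"
      using step.hyps by (simp add: Suc_diff_le)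
    finally show ?case using step.IH by simp
  qed
  have PN: "Ptail \<gamma> v N2 > 0" using Ptail_pos by (simp add: N2_def)
  have "\<forall>k\<ge>N2. 1 / Ptail \<gamma> v k \<le> (1 / Ptail \<gamma> v N2) * (1 + \<delta>) ^ k"
  proof (intro allI impI)
    fix k assume k: "k \<ge> N2"
    have Pk: "Ptail \<gamma> v k > 0" using Ptail_pos k by (simp add: N2_def)
    have "Ptail \<gamma> v N2 \<le> (1 + \<delta>) ^ (k - N2) * Ptail \<gamma> v k" using P k .
    also have "\<dots> \<le> (1 + \<delta>) ^ k * Ptail \<gamma> v k"
      using d Pk by (intro mult_right_mono power_increasing) auto
    finally show "1 / Ptail \<gamma> v k \<le> (1 / Ptail \<gamma> v N2) * (1 + \<delta>) ^ k"
      using PN Pk by (simp add: field_simps)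
  qed
  thus ?thesis by blast
qed

lemma g_lower: "k \<ge> 2 \<Longrightarrow> 1 / cmod (\<gamma> k) \<le> (q\<^sup>2 / cmod (\<gamma> 2)) * (1/q) ^ k"
proof -
  assume k: "k \<ge> 2"
  have g2: "cmod (\<gamma> 2) > 0" using g2nz by simp
  have "q ^ k = q ^ (2 + (k - 2))" using k by (simp only: le_add_diff_inverse)
  also have "\<dots> = q\<^sup>2 * q ^ (k - 2)" by (rule power_add)
  finally have "q ^ k = q\<^sup>2 * q ^ (k - 2)" .
  hence "q ^ k * cmod (\<gamma> 2) / q\<^sup>2 \<le> cmod (\<gamma> k)" using ggrow[OF k] q1 by (simp add: field_simps)
  moreover have "q ^ k * cmod (\<gamma> 2) / q\<^sup>2 > 0" using q1 g2 by simp
  ultimately have "1 / cmod (\<gamma> k) \<le> 1 / (q ^ k * cmod (\<gamma> 2) / q\<^sup>2)"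
    by (intro frac_le) auto
  also have "\<dots> = (q\<^sup>2 / cmod (\<gamma> 2)) * (1/q) ^ k" by (simp add: power_divide field_simps)
  finally show ?thesis .
qed

lemma exp_S_bound: "(\<And>k. (\<Sum>i<k. e i) \<le> C + \<delta> * real k) \<Longrightarrow>
    exp (S k) \<le> exp (Q * C + Q * E * Q) * exp (Q * \<delta>) ^ k"
proof -
  assume T: "\<And>k. (\<Sum>i<k. e i) \<le> C + \<delta> * real k"
  have "S k \<le> Q * (C + \<delta> * real k) + Q * E * Q"
    unfolding S_def using T[of k] Qpos by (intro add_right_mono mult_left_mono) auto
  hence "exp (S k) \<le> exp (Q * (C + \<delta> * real k) + Q * E * Q)" by simp
  also have "\<dots> = exp (Q * C + Q * E * Q) * exp (real k * (Q * \<delta>))"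
    by (simp add: exp_add[symmetric] algebra_simps)
  also have "\<dots> = exp (Q * C + Q * E * Q) * exp (Q * \<delta>) ^ k" by (simp add: exp_of_nat_mult)
  finally show ?thesis .
qed

lemma summable_geo_bound:
  fixes t :: "nat \<Rightarrow> real"
  assumes "\<forall>\<^sub>F k in sequentially. norm (t k) \<le> K * r ^ k" "0 \<le> r" "r < 1"
  shows "summable t"
proof (rule summable_comparison_test_ev[OF assms(1)])
  show "summable (\<lambda>k. K * r ^ k)" using assms by (intro summable_mult summable_geometric) simp
qed

definition \<delta>0 :: real where "\<delta>0 = ln q / (2 + 4 * Q)"

lemma delta0: "\<delta>0 > 0" "exp (Q * \<delta>0) < q" "exp (2 * Q * \<delta>0) * (1 + \<delta>0) < q\<^sup>2"
proof -
  have lq: "ln q > 0" using q1 by simp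
  show "\<delta>0 > 0" using lq Qpos by (simp add: \<delta>0_def)
  have key: "(1 + 2 * Q) * \<delta>0 = ln q / 2" using Qpos by (simp add: \<delta>0_def field_simps)
  have ek: "exp ((1 + 2 * Q) * \<delta>0) < q"
  proof -
    have "exp (ln q / 2) < exp (ln q)" using lq by simp
    thus ?thesis unfolding key using q1 by simp
  qed
  have "exp (Q * \<delta>0) \<le> exp ((1 + 2 * Q) * \<delta>0)"
    using Qpos \<open>\<delta>0 > 0\<close> by (simp add: algebra_simps)
  thus "exp (Q * \<delta>0) < q" using ek by linarith
  have "exp (2 * Q * \<delta>0) * (1 + \<delta>0) \<le> exp (2 * Q * \<delta>0) * exp \<delta>0"
    by (intro mult_left_mono) auto
  also have "\<dots> = exp ((1 + 2 * Q) * \<delta>0)" by (simp add: exp_add[symmetric] algebra_simps)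
  also have "\<dots> < q" by (rule ek)
  also have "q < q\<^sup>2" using q1 by (simp add: power2_eq_square)
  finally show "exp (2 * Q * \<delta>0) * (1 + \<delta>0) < q\<^sup>2" .
qed

end

context setting begin

lemma B_nonneg: "B k \<ge> 0" by (simp add: B_def)

lemma B_bound2:
  assumes T: "\<And>k. (\<Sum>i<k. e i) \<le> C + \<delta> * real k" and k: "k \<ge> 2"
  shows "B k \<le> Q * e k * (exp (Q * C + Q * E * Q) * exp (Q * \<delta>) ^ k)"
  unfolding B_def
  by (intro mult_mono alpha_bound[OF k] exp_S_bound T) (use Qpos e_nonneg in auto)

lemma l2_summ: "summable (\<lambda>k. (B k)\<^sup>2 / v k)"
proof -
  obtain C where T: "\<And>k. (\<Sum>i<k. e i) \<le> C + \<delta>0 * real k" using T_bound[OF delta0(1)] by blast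
  obtain C2 N2 where PL: "\<forall>k\<ge>N2. 1 / Ptail \<gamma> v k \<le> C2 * (1 + \<delta>0) ^ k"
    using P_lower[OF delta0(1)] by blast
  define XS where "XS = exp (Q * C + Q * E * Q)"
  define A where "A = exp (Q * \<delta>0)"
  define G where "G = q\<^sup>2 / cmod (\<gamma> 2)"
  define r where "r = A\<^sup>2 * (1 + \<delta>0) / q\<^sup>2"
  have A2: "A\<^sup>2 = exp (2 * Q * \<delta>0)" unfolding A_def by (simp add: exp_double[symmetric] power2_eq_square mult_ac exp_add[symmetric])
  have r0: "0 \<le> r" using delta0(1) by (simp add: r_def)
  have r1: "r < 1" using delta0(3) q1 unfolding r_def A2 by (simp add: field_simps)
  show ?thesis
  proof (rule summable_geo_bound[OF _ r0 r1, where K = "Q\<^sup>2 * XS\<^sup>2 * (4 * M) * G\<^sup>2 * C2"])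
    show "\<forall>\<^sub>F k in sequentially. norm ((B k)\<^sup>2 / v k) \<le> Q\<^sup>2 * XS\<^sup>2 * (4 * M) * G\<^sup>2 * C2 * r ^ k"
      using e_sq_bound eventually_ge_at_top[of "max 2 N2"]
    proof eventually_elim
      case (elim k)
      have k2: "k \<ge> 2" and kN: "k \<ge> N2" using elim by auto
      have vk: "v k > 0" using vpos k2 by simp
      have gk: "cmod (\<gamma> k) > 0" using gnz k2 by simp
      have Pk: "Ptail \<gamma> v k > 0" using Ptail_pos k2 by simp
      have uP: "u k / Ptail \<gamma> v k = v k * (1 / cmod (\<gamma> k))\<^sup>2 * (1 / Ptail \<gamma> v k)"
        by (simp add: u_def power_divide)
      have esq: "(e k)\<^sup>2 \<le> 4 * M * (v k * (1 / cmod (\<gamma> k))\<^sup>2 * (1 / Ptail \<gamma> v k))"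
        using elim(1) uP by simp
      have M0: "0 \<le> 4 * M"
      proof -
        have "0 \<le> 4 * M * (v k * (1 / cmod (\<gamma> k))\<^sup>2 * (1 / Ptail \<gamma> v k))"
          using esq order_trans[OF zero_le_power2] by blast
        moreover have "v k * (1 / cmod (\<gamma> k))\<^sup>2 * (1 / Ptail \<gamma> v k) > 0" using vk gk Pk by simp
        moreover have "\<And>a X::real. 0 \<le> a * X \<Longrightarrow> 0 < X \<Longrightarrow> 0 \<le> a"
          by (auto simp: zero_le_mult_iff)
        ultimately show ?thesis by blast
      qed
      have Bk: "B k \<le> Q * e k * (XS * A ^ k)"
        using B_bound2[OF T k2] by (simp add: XS_def A_def)
      have "(B k)\<^sup>2 \<le> (Q * e k * (XS * A ^ k))\<^sup>2"
        using Bk B_nonneg by (intro power_mono) auto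
      also have "\<dots> = Q\<^sup>2 * XS\<^sup>2 * (A ^ k)\<^sup>2 * (e k)\<^sup>2" by (simp add: power_mult_distrib)
      also have "\<dots> \<le> Q\<^sup>2 * XS\<^sup>2 * (A ^ k)\<^sup>2 * (4 * M * (v k * (1 / cmod (\<gamma> k))\<^sup>2 * (1 / Ptail \<gamma> v k)))"
        by (intro mult_left_mono esq) auto
      finally have B2: "(B k)\<^sup>2 / v k \<le> Q\<^sup>2 * XS\<^sup>2 * (A ^ k)\<^sup>2 * (4 * M) * ((1 / cmod (\<gamma> k))\<^sup>2 * (1 / Ptail \<gamma> v k))"
        using vk by (simp add: field_simps)
      have g1: "(1 / cmod (\<gamma> k))\<^sup>2 \<le> (G * (1/q) ^ k)\<^sup>2"
        using g_lower[OF k2] gk by (intro power_mono) (auto simp: G_def)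
      have p1: "1 / Ptail \<gamma> v k \<le> C2 * (1 + \<delta>0) ^ k" using PL kN by simp
      have "(1 / cmod (\<gamma> k))\<^sup>2 * (1 / Ptail \<gamma> v k) \<le> (G * (1/q) ^ k)\<^sup>2 * (C2 * (1 + \<delta>0) ^ k)"
        using g1 p1 Pk by (intro mult_mono) auto
      hence "Q\<^sup>2 * XS\<^sup>2 * (A ^ k)\<^sup>2 * (4 * M) * ((1 / cmod (\<gamma> k))\<^sup>2 * (1 / Ptail \<gamma> v k))
          \<le> Q\<^sup>2 * XS\<^sup>2 * (A ^ k)\<^sup>2 * (4 * M) * ((G * (1/q) ^ k)\<^sup>2 * (C2 * (1 + \<delta>0) ^ k))"
        by (rule mult_left_mono) (use M0 in simp)
      with B2 have "(B k)\<^sup>2 / v k \<le> Q\<^sup>2 * XS\<^sup>2 * (A ^ k)\<^sup>2 * (4 * M) * ((G * (1/q) ^ k)\<^sup>2 * (C2 * (1 + \<delta>0) ^ k))"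
        by (rule order_trans)
      also have "\<dots> = Q\<^sup>2 * XS\<^sup>2 * (4 * M) * G\<^sup>2 * C2 * ((A ^ k)\<^sup>2 * ((1/q) ^ k)\<^sup>2 * (1 + \<delta>0) ^ k)"
        by (simp only: power_mult_distrib mult_ac)
      also have "(A ^ k)\<^sup>2 * ((1/q) ^ k)\<^sup>2 * (1 + \<delta>0) ^ k = r ^ k"
      proof -
        have pw: "\<And>x::real. (x ^ k)\<^sup>2 = (x\<^sup>2) ^ k" by (simp only: power_mult[symmetric] mult.commute)
        show ?thesis unfolding r_def pw by (simp add: power_mult_distrib power_divide)
      qed
      finally show ?case using B_nonneg vk by simp
    qed
  qed
qed

lemma H_summ:
  assumes m: "m \<ge> 2"
  shows "summable (\<lambda>k. B k / cmod (\<Lambda> m - \<gamma> k))"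
proof -
  obtain C where T: "\<And>k. (\<Sum>i<k. e i) \<le> C + \<delta>0 * real k" using T_bound[OF delta0(1)] by blast
  define XS where "XS = exp (Q * C + Q * E * Q)"
  define A where "A = exp (Q * \<delta>0)"
  define G where "G = q\<^sup>2 / cmod (\<gamma> 2)"
  define r where "r = A / q"
  have r0: "0 \<le> r" using q1 by (simp add: r_def A_def)
  have r1: "r < 1" using delta0(2) q1 unfolding r_def A_def by simp
  show ?thesis
  proof (rule summable_geo_bound[OF _ r0 r1, where K = "2 * Q * E * XS * G"])
    show "\<forall>\<^sub>F k in sequentially. norm (B k / cmod (\<Lambda> m - \<gamma> k)) \<le> 2 * Q * E * XS * G * r ^ k"
      using g_large[of "2 * cmod (\<Lambda> m)"] eventually_ge_at_top[of 2]
    proof eventually_elim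
      case (elim k)
      have k2: "k \<ge> 2" using elim by simp
      have gk: "cmod (\<gamma> k) > 0" using gnz k2 by simp
      have "cmod (\<Lambda> m - \<gamma> k) \<ge> cmod (\<gamma> k) - cmod (\<Lambda> m)"
        by (metis norm_minus_commute norm_triangle_ineq2)
      hence D: "cmod (\<Lambda> m - \<gamma> k) \<ge> cmod (\<gamma> k) / 2" using elim by simp
      have Bk: "B k \<le> Q * E * (XS * A ^ k)"
      proof -
        have "B k \<le> Q * e k * (XS * A ^ k)" using B_bound2[OF T k2] by (simp add: XS_def A_def)
        also have "\<dots> \<le> Q * E * (XS * A ^ k)"
          using e_le_E[of k] Qpos by (intro mult_right_mono mult_left_mono) (auto simp: XS_def A_def)
        finally show ?thesis .
      qed
      have "B k / cmod (\<Lambda> m - \<gamma> k) \<le> (Q * E * (XS * A ^ k)) / (cmod (\<gamma> k) / 2)"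
        using Bk D gk B_nonneg[of k] by (intro frac_le) auto
      also have "\<dots> = 2 * Q * E * XS * A ^ k * (1 / cmod (\<gamma> k))" by (simp add: field_simps)
      also have "\<dots> \<le> 2 * Q * E * XS * A ^ k * (G * (1/q) ^ k)"
        using g_lower[OF k2] Qpos E_pos by (intro mult_left_mono) (auto simp: G_def XS_def A_def)
      also have "\<dots> = 2 * Q * E * XS * G * r ^ k"
        by (simp add: r_def power_divide field_simps)
      finally show ?case using B_nonneg[of k] by simp
    qed
  qed
qed

end

context setting begin

lemma Hsums:
  assumes m: "m \<ge> 2"
  shows "(\<lambda>k. d (Suc k) / (\<Lambda> m - \<gamma> (Suc k))) sums 0"
proof -
  define f where "f k N = (if k < N then dN (Suc k) N / (\<Lambda> m - \<gamma> (Suc k)) else 0)" for k N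
  define b where "b k = d (Suc k) / (\<Lambda> m - \<gamma> (Suc k))" for k
  define Mb where "Mb k = B (Suc k) / cmod (\<Lambda> m - \<gamma> (Suc k))" for k
  have lim: "(\<lambda>N. f k N) \<longlonglongrightarrow> b k" for k
  proof (rule Lim_transform_eventually)
    show "(\<lambda>N. dN (Suc k) N / (\<Lambda> m - \<gamma> (Suc k))) \<longlonglongrightarrow> b k"
      unfolding b_def by (intro tendsto_divide tendsto_const dN_tends) (use disjoint[OF m, of "Suc k"] in simp_all)
    show "\<forall>\<^sub>F N in sequentially. dN (Suc k) N / (\<Lambda> m - \<gamma> (Suc k)) = f k N"
      using eventually_gt_at_top[of k] by eventually_elim (simp add: f_def)
  qed
  have bound: "\<forall>\<^sub>F (k, N) in at_top \<times>\<^sub>F sequentially. norm (f k N) \<le> Mb k"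
  proof (rule always_eventually, clarify)
    fix k N
    show "norm (f k N) \<le> Mb k"
    proof (cases "k < N")
      case True
      have "norm (f k N) = norm (dN (Suc k) N) / cmod (\<Lambda> m - \<gamma> (Suc k))"
        using True by (simp add: f_def norm_divide)
      also have "\<dots> \<le> Mb k" unfolding Mb_def
        by (intro divide_right_mono dN_bound) auto
      finally show ?thesis .
    next
      case False then show ?thesis using B_nonneg by (simp add: f_def Mb_def)
    qed
  qed
  have sMb: "summable Mb"
    unfolding Mb_def using H_summ[OF m] by (subst summable_Suc_iff)
  note tan = tannerys_theorem[OF lim bound sMb sequentially_bot]
  have sb: "summable (\<lambda>n. norm (b n))" using tan by (rule conjunct1[OF conjunct2])
  have tl: "(\<lambda>N. suminf (\<lambda>k. f k N)) \<longlonglongrightarrow> suminf b" using tan by (rule conjunct2[OF conjunct2])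
  have ev0: "\<forall>\<^sub>F N in sequentially. suminf (\<lambda>k. f k N) = 0"
    using eventually_ge_at_top[of m]
  proof eventually_elim
    case (elim N)
    have "suminf (\<lambda>k. f k N) = (\<Sum>k<N. f k N)"
      by (rule suminf_finite) (auto simp: f_def)
    also have "\<dots> = (\<Sum>k<N. dN (Suc k) N / (\<Lambda> m - \<gamma> (Suc k)))"
      by (simp add: f_def)
    also have "\<dots> = (\<Sum>k\<in>{Suc 0..N}. dN k N / (\<Lambda> m - \<gamma> k))"
      by (rule sum.atLeast1_atMost_eq[symmetric])
    also have "\<dots> = 0" using lagrange_dN[OF m elim] by simp
    finally show ?case .
  qed
  have "(\<lambda>N. suminf (\<lambda>k. f k N)) \<longlonglongrightarrow> 0" using ev0 by (rule tendsto_eventually)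
  hence "suminf b = 0" using tl LIMSEQ_unique by blast
  moreover have "summable b" using sb by (rule summable_norm_cancel)
  ultimately have "b sums 0" using summable_sums by fastforce
  thus ?thesis by (simp add: b_def[abs_def])
qed

end

theorem lemma11:
  fixes \<gamma> :: "nat \<Rightarrow> complex" and v :: "nat \<Rightarrow> real" and \<Lambda> :: "nat \<Rightarrow> complex"
  assumes inj_gamma: "inj_on \<gamma> {1..}"
    and sep: "sep_ratio \<gamma>"
    and weight: "weight_ok \<gamma> v"
    and small_o: "(\<lambda>n. v n / (cmod (\<gamma> n))\<^sup>2) \<in> o(Ptail \<gamma> v)"
    and inj_Lambda: "inj_on \<Lambda> {2..}"
    and nonzero: "\<forall>n\<ge>2. \<Lambda> n \<noteq> 0"
    and disjoint: "\<forall>n\<ge>2. \<forall>m\<ge>1. \<Lambda> n \<noteq> \<gamma> m"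
    and mono: "\<forall>n\<ge>2. cmod (\<Lambda> n) \<le> cmod (\<Lambda> (Suc n))"
    and perturb: "\<exists>M. \<forall>\<^sub>F n in sequentially. \<Lambda> n \<in> Dset \<gamma> v M n"
  shows "\<exists>a :: nat \<Rightarrow> complex. l2v v a \<and> (\<exists>n\<ge>1. a n \<noteq> 0) \<and>
           (\<forall>n\<ge>2. H_term \<gamma> v a (\<Lambda> n) sums 0)"
proof -
  obtain q where q1: "q > 1" and sq: "\<forall>n\<ge>1. q * cmod (\<gamma> n) \<le> cmod (\<gamma> (Suc n))"
    using sep unfolding sep_ratio_def by blast
  obtain M where Mev: "\<forall>\<^sub>F n in sequentially. \<Lambda> n \<in> Dset \<gamma> v M n" using perturb by blast
  interpret S: setting \<gamma> v \<Lambda> q M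
    by unfold_locales (use q1 sq inj_gamma weight small_o nonzero disjoint Mev in \<open>auto simp: weight_ok_def\<close>)
  define a where "a j = S.d j / complex_of_real (v j)" for j
  have av: "a j * complex_of_real (v j) = S.d j" if "j \<ge> 1" for j
    using S.vpos[OF that] by (simp add: a_def)
  show ?thesis
  proof (intro exI[of _ a] conjI)
    have l2s: "summable (\<lambda>n. (S.B (Suc n))\<^sup>2 / v (Suc n))"
      using S.l2_summ by (subst summable_Suc_iff)
    show "l2v v a"
      unfolding l2v_def
    proof (rule summable_comparison_test[OF _ l2s])
      show "\<exists>N. \<forall>n\<ge>N. norm ((cmod (a (Suc n)))\<^sup>2 * v (Suc n)) \<le> (S.B (Suc n))\<^sup>2 / v (Suc n)"
      proof (intro exI allI impI)
        fix n :: nat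
        have vp: "v (Suc n) > 0" using S.vpos by simp
        have "norm ((cmod (a (Suc n)))\<^sup>2 * v (Suc n)) = (cmod (S.d (Suc n)))\<^sup>2 / v (Suc n)"
          using vp by (simp add: a_def norm_divide power_divide power2_eq_square)
        also have "\<dots> \<le> (S.B (Suc n))\<^sup>2 / v (Suc n)"
          using S.d_bound[of "Suc n"] vp by (intro divide_right_mono power_mono) auto
        finally show "norm ((cmod (a (Suc n)))\<^sup>2 * v (Suc n)) \<le> (S.B (Suc n))\<^sup>2 / v (Suc n)" .
      qed
    qed
    show "\<exists>n\<ge>1. a n \<noteq> 0"
      using S.d1_nz S.vpos[of 1] by (intro exI[of _ 1]) (simp add: a_def)
    show "\<forall>n\<ge>2. H_term \<gamma> v a (\<Lambda> n) sums 0"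
    proof (intro allI impI)
      fix n :: nat assume n: "n \<ge> 2"
      have "H_term \<gamma> v a (\<Lambda> n) = (\<lambda>k. S.d (Suc k) / (\<Lambda> n - \<gamma> (Suc k)))"
        by (rule ext) (simp add: H_term_def av)
      thus "H_term \<gamma> v a (\<Lambda> n) sums 0" using S.Hsums[OF n] by simp
    qed
  qed
qed

end
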